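(* Let $G\in\mathcal{C}$, let $C$ be a proper separator of $G$ with full components $L$ and $R$, let $c_1,c_2\in C$, and let $H$ be a $(C,c_1,c_2)$-hole, with $H_L,H_R,\ell_1,\ell_2,r_1,r_2$ as defined below. Suppose $v\in V(G)\setminus V(H)$ has a neighbor in $H_L^*\setminus\{\ell_1,\ell_2\}$ and a neighbor in $H_R^*\setminus\{r_1,r_2\}$. Then $v$ is $(c_1,c_2)$-heavy with respect to $H$.
   Context: All graphs are finite and simple; paths are induced paths; a hole is an induced cycle of length at least four. $\mathcal{C}$ is the class of graphs containing no theta, pyramid, prism or turtle as an induced subgraph (theta: two nonadjacent vertices joined by three otherwise disjoint paths, any two inducing a hole; pyramid: a vertex $a$ joined to the three vertices $b_i$ of a triangle by paths disjoint except at $a$, any two inducing a hole; prism: two disjoint triangles $\{a_i\},\{b_i\}$ joined by disjoint paths $a_i$–$b_i$, any two inducing a hole; turtle: a hole formed by disjoint paths $P_1$ from $a_1$ to $b_1$ and $P_2$ from $a_2$ to $b_2$ with edges $a_1a_2,b_1b_2$, plus adjacent vertices $x,y$, $x$ having $\ge3$ neighbors in $P_1$ and none in $P_2$, $y$ having $\ge3$ neighbors in $P_2$ and none in $P_1$). A minimal separator $C$ of $G$ is a set such that $G\setminus C$ has two distinct components $L,R$ with $N(L)=N(R)=C$; it is proper if it is not a clique, in which case $G\setminus C$ has exactly two components $L,R$ with $N(L)=N(R)=C$ (the full components). For $c_1,c_2\in C$, a $(C,c_1,c_2)$-hole is a hole $H$ with $V(H)\cap C=\{c_1,c_2\}$ whose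 two $c_1$–$c_2$ paths $H_L,H_R$ satisfy $H_L^*\subseteq L$ and $H_R^*\subseteq R$, where $P^*$ denotes the interior (vertices other than the ends) of a path $P$. $\ell_1,\ell_2$ are the neighbors of $c_1,c_2$ in $H_L$, and $r_1,r_2$ are the neighbors of $c_1,c_2$ in $H_R$. For $u\notin V(H)$, $N_H(u)$ is the set of its neighbors in $H$; $u$ is major for $H$ if $N_H(u)\ne\emptyset$ and $N_H(u)$ is not contained in the vertex set of any three-vertex subpath of $H$. A $w$-sector is a subpath $Q=x\text{-}\cdots\text{-}y$ of $H$ with $x,y$ neighbors of $w$ and no interior vertex adjacent to $w$; an extended neighborhood of $w$ in $H$ is $Q\cup(\{x',y'\}\cap N_H(w))$ for a $w$-sector $Q=x\text{-}\cdots\text{-}y$, where $x',y'$ are the neighbors of $x,y$ in $H\setminus V(Q)$; $a,b\in V(H)$ are distant in $H$ with respect to $w$ if no extended neighborhood of $w$ contains both. A vertex $v$ is $(c_1,c_2)$-heavy with respect to $H$ if $v$ is major for $H$ and $c_1,c_2$ are distant in $H$ with respect to $v$. *)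

theory Defs
  imports Main
begin

definition graph :: "'a set \<Rightarrow> ('a \<Rightarrow> 'a \<Rightarrow> bool) \<Rightarrow> bool" where
  "graph V E \<longleftrightarrow> finite V \<and> (\<forall>u v. E u v \<longrightarrow> E v u) \<and> (\<forall>u. \<not> E u u)
     \<and> (\<forall>u v. E u v \<longrightarrow> u \<in> V \<and> v \<in> V)"

definition is_path :: "'a set \<Rightarrow> ('a \<Rightarrow> 'a \<Rightarrow> bool) \<Rightarrow> 'a list \<Rightarrow> bool" where
  "is_path V E P \<longleftrightarrow> P \<noteq> [] \<and> distinct P \<and> set P \<subseteq> V \<and>
     (\<forall>i < length P. \<forall>j < length P. E (P ! i) (P ! j) \<longleftrightarrow> (i = Suc j \<or> j = Suc i))"

definition path_from_to :: "'a set \<Rightarrow> ('a \<Rightarrow> 'a \<Rightarrow> bool) \<Rightarrow> 'a list \<Rightarrow> 'a \<Rightarrow> 'a \<Rightarrow> bool" where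
  "path_from_to V E P a b \<longleftrightarrow> is_path V E P \<and> hd P = a \<and> last P = b"

definition is_hole :: "'a set \<Rightarrow> ('a \<Rightarrow> 'a \<Rightarrow> bool) \<Rightarrow> 'a list \<Rightarrow> bool" where
  "is_hole V E H \<longleftrightarrow> distinct H \<and> length H \<ge> 4 \<and> set H \<subseteq> V \<and>
     (\<forall>i < length H. \<forall>j < length H.
        E (H ! i) (H ! j) \<longleftrightarrow> (Suc i mod length H = j \<or> Suc j mod length H = i))"

definition induces_hole :: "'a set \<Rightarrow> ('a \<Rightarrow> 'a \<Rightarrow> bool) \<Rightarrow> 'a set \<Rightarrow> bool" where
  "induces_hole V E S \<longleftrightarrow> (\<exists>H. is_hole V E H \<and> set H = S)"

definition has_theta :: "'a set \<Rightarrow> ('a \<Rightarrow> 'a \<Rightarrow> bool) \<Rightarrow> bool" where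
  "has_theta V E \<longleftrightarrow> (\<exists>a b P1 P2 P3. a \<noteq> b \<and> \<not> E a b \<and>
     path_from_to V E P1 a b \<and> path_from_to V E P2 a b \<and> path_from_to V E P3 a b \<and>
     set P1 \<inter> set P2 = {a, b} \<and> set P1 \<inter> set P3 = {a, b} \<and> set P2 \<inter> set P3 = {a, b} \<and>
     induces_hole V E (set P1 \<union> set P2) \<and> induces_hole V E (set P1 \<union> set P3) \<and>
     induces_hole V E (set P2 \<union> set P3))"

definition has_pyramid :: "'a set \<Rightarrow> ('a \<Rightarrow> 'a \<Rightarrow> bool) \<Rightarrow> bool" where
  "has_pyramid V E \<longleftrightarrow> (\<exists>a b1 b2 b3 P1 P2 P3. distinct [a, b1, b2, b3] \<and>
     E b1 b2 \<and> E b1 b3 \<and> E b2 b3 \<and>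
     path_from_to V E P1 a b1 \<and> path_from_to V E P2 a b2 \<and> path_from_to V E P3 a b3 \<and>
     set P1 \<inter> set P2 = {a} \<and> set P1 \<inter> set P3 = {a} \<and> set P2 \<inter> set P3 = {a} \<and>
     induces_hole V E (set P1 \<union> set P2) \<and> induces_hole V E (set P1 \<union> set P3) \<and>
     induces_hole V E (set P2 \<union> set P3))"

definition has_prism :: "'a set \<Rightarrow> ('a \<Rightarrow> 'a \<Rightarrow> bool) \<Rightarrow> bool" where
  "has_prism V E \<longleftrightarrow> (\<exists>a1 a2 a3 b1 b2 b3 P1 P2 P3. distinct [a1, a2, a3, b1, b2, b3] \<and>
     E a1 a2 \<and> E a1 a3 \<and> E a2 a3 \<and> E b1 b2 \<and> E b1 b3 \<and> E b2 b3 \<and>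
     path_from_to V E P1 a1 b1 \<and> path_from_to V E P2 a2 b2 \<and> path_from_to V E P3 a3 b3 \<and>
     set P1 \<inter> set P2 = {} \<and> set P1 \<inter> set P3 = {} \<and> set P2 \<inter> set P3 = {} \<and>
     induces_hole V E (set P1 \<union> set P2) \<and> induces_hole V E (set P1 \<union> set P3) \<and>
     induces_hole V E (set P2 \<union> set P3))"

definition has_turtle :: "'a set \<Rightarrow> ('a \<Rightarrow> 'a \<Rightarrow> bool) \<Rightarrow> bool" where
  "has_turtle V E \<longleftrightarrow> (\<exists>a1 b1 a2 b2 P1 P2 x y.
     path_from_to V E P1 a1 b1 \<and> path_from_to V E P2 a2 b2 \<and> set P1 \<inter> set P2 = {} \<and>
     E a1 a2 \<and> E b1 b2 \<and> induces_hole V E (set P1 \<union> set P2) \<and>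
     x \<in> V \<and> y \<in> V \<and> x \<notin> set P1 \<union> set P2 \<and> y \<notin> set P1 \<union> set P2 \<and> E x y \<and>
     card {u \<in> set P1. E x u} \<ge> 3 \<and> (\<forall>u \<in> set P2. \<not> E x u) \<and>
     card {u \<in> set P2. E y u} \<ge> 3 \<and> (\<forall>u \<in> set P1. \<not> E y u))"

definition in_class_C :: "'a set \<Rightarrow> ('a \<Rightarrow> 'a \<Rightarrow> bool) \<Rightarrow> bool" where
  "in_class_C V E \<longleftrightarrow> graph V E \<and> \<not> has_theta V E \<and> \<not> has_pyramid V E \<and>
     \<not> has_prism V E \<and> \<not> has_turtle V E"

definition connected_set :: "('a \<Rightarrow> 'a \<Rightarrow> bool) \<Rightarrow> 'a set \<Rightarrow> bool" where
  "connected_set E S \<longleftrightarrow>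
     (\<forall>u \<in> S. \<forall>v \<in> S. (u, v) \<in> {(x, y). x \<in> S \<and> y \<in> S \<and> E x y}\<^sup>*)"

definition component_of :: "('a \<Rightarrow> 'a \<Rightarrow> bool) \<Rightarrow> 'a set \<Rightarrow> 'a set \<Rightarrow> bool" where
  "component_of E W S \<longleftrightarrow> S \<noteq> {} \<and> S \<subseteq> W \<and> connected_set E S \<and>
     (\<forall>u \<in> S. \<forall>w \<in> W - S. \<not> E u w)"

definition nbhd_set :: "'a set \<Rightarrow> ('a \<Rightarrow> 'a \<Rightarrow> bool) \<Rightarrow> 'a set \<Rightarrow> 'a set" where
  "nbhd_set V E S = {v \<in> V - S. \<exists>u \<in> S. E u v}"

definition is_clique :: "('a \<Rightarrow> 'a \<Rightarrow> bool) \<Rightarrow> 'a set \<Rightarrow> bool" where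
  "is_clique E C \<longleftrightarrow> (\<forall>u \<in> C. \<forall>v \<in> C. u \<noteq> v \<longrightarrow> E u v)"

text \<open>C is a proper (minimal) separator with L and R distinct full components of G minus C.\<close>
definition proper_separator :: "'a set \<Rightarrow> ('a \<Rightarrow> 'a \<Rightarrow> bool) \<Rightarrow> 'a set \<Rightarrow> 'a set \<Rightarrow> 'a set \<Rightarrow> bool" where
  "proper_separator V E C L R \<longleftrightarrow> C \<subseteq> V \<and>
     component_of E (V - C) L \<and> component_of E (V - C) R \<and> L \<noteq> R \<and>
     nbhd_set V E L = C \<and> nbhd_set V E R = C \<and> \<not> is_clique E C"

definition sep_hole :: "'a set \<Rightarrow> ('a \<Rightarrow> 'a \<Rightarrow> bool) \<Rightarrow> 'a set \<Rightarrow> 'a set \<Rightarrow> 'a set \<Rightarrow>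
     'a \<Rightarrow> 'a \<Rightarrow> 'a list \<Rightarrow> 'a list \<Rightarrow> 'a list \<Rightarrow> bool" where
  "sep_hole V E C L R c1 c2 H HL HR \<longleftrightarrow> is_hole V E H \<and> c1 \<noteq> c2 \<and>
     set H \<inter> C = {c1, c2} \<and>
     path_from_to V E HL c1 c2 \<and> path_from_to V E HR c1 c2 \<and>
     set HL \<union> set HR = set H \<and> set HL \<inter> set HR = {c1, c2} \<and>
     set HL - {c1, c2} \<subseteq> L \<and> set HR - {c1, c2} \<subseteq> R"

text \<open>Notions relative to a hole H (its vertex set; H is induced, so its edges are those of G).\<close>
definition nbrs_in :: "('a \<Rightarrow> 'a \<Rightarrow> bool) \<Rightarrow> 'a list \<Rightarrow> 'a \<Rightarrow> 'a set" where
  "nbrs_in E H u = {h \<in> set H. E u h}"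

definition is_major :: "'a set \<Rightarrow> ('a \<Rightarrow> 'a \<Rightarrow> bool) \<Rightarrow> 'a list \<Rightarrow> 'a \<Rightarrow> bool" where
  "is_major V E H u \<longleftrightarrow> nbrs_in E H u \<noteq> {} \<and>
     \<not> (\<exists>a b c. is_path V E [a, b, c] \<and> set [a, b, c] \<subseteq> set H \<and>
            nbrs_in E H u \<subseteq> {a, b, c})"

definition is_sector :: "'a set \<Rightarrow> ('a \<Rightarrow> 'a \<Rightarrow> bool) \<Rightarrow> 'a list \<Rightarrow> 'a \<Rightarrow> 'a list \<Rightarrow> bool" where
  "is_sector V E H w Q \<longleftrightarrow> is_path V E Q \<and> set Q \<subseteq> set H \<and> hd Q \<noteq> last Q \<and>
     E w (hd Q) \<and> E w (last Q) \<and> (\<forall>q \<in> set Q - {hd Q, last Q}. \<not> E w q)"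

definition ext_nbhd :: "('a \<Rightarrow> 'a \<Rightarrow> bool) \<Rightarrow> 'a list \<Rightarrow> 'a \<Rightarrow> 'a list \<Rightarrow> 'a set" where
  "ext_nbhd E H w Q = set Q \<union>
     {u \<in> set H - set Q. (E u (hd Q) \<or> E u (last Q)) \<and> E w u}"

definition distant :: "'a set \<Rightarrow> ('a \<Rightarrow> 'a \<Rightarrow> bool) \<Rightarrow> 'a list \<Rightarrow> 'a \<Rightarrow> 'a \<Rightarrow> 'a \<Rightarrow> bool" where
  "distant V E H w a b \<longleftrightarrow> a \<in> set H \<and> b \<in> set H \<and>
     \<not> (\<exists>Q. is_sector V E H w Q \<and> a \<in> ext_nbhd E H w Q \<and> b \<in> ext_nbhd E H w Q)"

definition heavy :: "'a set \<Rightarrow> ('a \<Rightarrow> 'a \<Rightarrow> bool) \<Rightarrow> 'a list \<Rightarrow> 'a \<Rightarrow> 'a \<Rightarrow> 'a \<Rightarrow> bool" where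
  "heavy V E H c1 c2 v \<longleftrightarrow> is_major V E H v \<and> distant V E H v c1 c2"

end

theory Submission
  imports Defs
begin

lemma comp_closed:
  assumes "component_of E W L" "S \<subseteq> W" "connected_set E S" "x \<in> S" "x \<in> L" "y \<in> S"
  shows "y \<in> L"
proof -
  have "(x, y) \<in> {(x, y). x \<in> S \<and> y \<in> S \<and> E x y}\<^sup>*"
    using assms(3,4,6) unfolding connected_set_def by blast
  then show ?thesis
  proof (induction rule: rtrancl_induct)
    case base then show ?case using assms(5) .
  next
    case (step y z)
    then show ?case using assms(1,2) unfolding component_of_def by blast
  qed
qed

lemma comp_disj:
  assumes "component_of E W L" "component_of E W R" "L \<noteq> R"
  shows "L \<inter> R = {}"
proof (rule ccontr)
  assume "L \<inter> R \<noteq> {}"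
  then obtain x where x: "x \<in> L" "x \<in> R" by blast
  have "L \<subseteq> R" using comp_closed[OF assms(2), of L x] assms(1) x unfolding component_of_def by blast
  moreover have "R \<subseteq> L" using comp_closed[OF assms(1), of R x] assms(2) x unfolding component_of_def by blast
  ultimately show False using assms(3) by blast
qed

lemma path_adj:
  assumes "is_path V E P" "i < length P" "j < length P"
  shows "E (P!i) (P!j) \<longleftrightarrow> (i = Suc j \<or> j = Suc i)"
proof -
  have "\<forall>i < length P. \<forall>j < length P. E (P ! i) (P ! j) \<longleftrightarrow> (i = Suc j \<or> j = Suc i)"
    using conjunct2[OF conjunct2[OF conjunct2[OF assms(1)[unfolded is_path_def]]]] .
  then show ?thesis using assms(2,3) by simp
qed

lemma path_props:
  assumes "is_path V E P"
  shows "P \<noteq> []" "distinct P" "set P \<subseteq> V"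
proof -
  note h = assms[unfolded is_path_def]
  show "P \<noteq> []" using conjunct1[OF h] .
  show "distinct P" using conjunct1[OF conjunct2[OF h]] .
  show "set P \<subseteq> V" using conjunct1[OF conjunct2[OF conjunct2[OF h]]] .
qed

lemma path_interval:
  assumes P: "is_path V E P" and S: "S \<subseteq> set P" "connected_set E S"
    and i: "P!i \<in> S" and j: "P!j \<in> S" and k: "i \<le> k" "k \<le> j" "j < length P"
  shows "P!k \<in> S"
proof (rule ccontr)
  assume nk: "P!k \<notin> S"
  have dP: "distinct P" using path_props[OF P] by blast
  have ik: "i < k" using nk i k by (cases "i = k") auto
  have "(P!i, P!j) \<in> {(x, y). x \<in> S \<and> y \<in> S \<and> E x y}\<^sup>*"
    using S(2) i j unfolding connected_set_def by blast
  then have "\<exists>p<k. P!j = P!p"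
  proof (induction rule: rtrancl_induct)
    case base then show ?case using ik by blast
  next
    case (step y z)
    then obtain p where p: "p < k" "y = P!p" by blast
    have "z \<in> set P" using step S(1) by blast
    then obtain q where q: "q < length P" "z = P!q" by (metis in_set_conv_nth)
    have "E (P!p) (P!q)" using step p q by simp
    then have "p = Suc q \<or> q = Suc p" using path_adj[OF P, of p q] p q k by simp
    moreover have "q \<noteq> k" using nk q step by auto
    ultimately have "q < k" using p by auto
    then show ?case using q by blast
  qed
  then obtain p where "p < k" "P!j = P!p" by blast
  then have "j = p" using dP k by (simp add: nth_eq_iff_index_eq)
  then show False using \<open>p < k\<close> k by simp
qed

lemma path_nbr0:
  assumes P: "is_path V E P" and "x \<in> set P" "E (P!0) x"
  shows "x = P!1"
proof -
  obtain q where q: "q < length P" "x = P!q" using assms(2) by (metis in_set_conv_nth)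
  have "0 < length P" using q by linarith
  then have "q = 1" using path_adj[OF P, of 0 q] q assms(3) by auto
  then show ?thesis using q by simp
qed

lemma path_nbrl:
  assumes P: "is_path V E P" and "x \<in> set P" "E (P!(length P - 1)) x"
  shows "x = P!(length P - 2)"
proof -
  obtain q where q: "q < length P" "x = P!q" using assms(2) by (metis in_set_conv_nth)
  have "length P - 1 < length P" using q by simp
  then have "length P - 1 = Suc q" using path_adj[OF P, of "length P - 1" q] q assms(3) by auto
  then have "q = length P - 2" by simp
  then show ?thesis using q by simp
qed

lemma interval_connected:
  assumes Q: "is_path V E Q" and "hi < length Q"
  shows "connected_set E {Q!k | k. lo \<le> k \<and> k \<le> hi}"
proof -
  let ?I = "{Q!k | k. lo \<le> k \<and> k \<le> hi}"
  let ?r = "{(x, y). x \<in> ?I \<and> y \<in> ?I \<and> E x y}"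
  have main: "(Q!p, Q!(p+d)) \<in> ?r\<^sup>* \<and> (Q!(p+d), Q!p) \<in> ?r\<^sup>*"
    if "lo \<le> p" "p + d \<le> hi" for p d
    using that
  proof (induction d)
    case 0 then show ?case by simp
  next
    case (Suc d)
    have e1: "E (Q!(p+d)) (Q!(p + Suc d))" and e2: "E (Q!(p + Suc d)) (Q!(p+d))"
      using path_adj[OF Q, of "p+d" "p + Suc d"] path_adj[OF Q, of "p + Suc d" "p+d"]
        Suc.prems assms(2) by auto
    have m1: "Q!(p+d) \<in> ?I" using Suc.prems by auto
    have m2: "Q!(p + Suc d) \<in> ?I" using Suc.prems by (intro CollectI exI[of _ "p + Suc d"]) auto
    have "(Q!(p+d), Q!(p + Suc d)) \<in> ?r" using e1 m1 m2 by blast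
    moreover have "(Q!(p + Suc d), Q!(p+d)) \<in> ?r" using e2 m1 m2 by blast
    ultimately have ed: "(Q!(p+d), Q!(p + Suc d)) \<in> ?r" "(Q!(p + Suc d), Q!(p+d)) \<in> ?r" by blast+
    have "p + d \<le> hi" using Suc.prems by simp
    then have IH: "(Q!p, Q!(p+d)) \<in> ?r\<^sup>*" "(Q!(p+d), Q!p) \<in> ?r\<^sup>*" using Suc.IH Suc.prems(1) by blast+
    show ?case using rtrancl_into_rtrancl[OF IH(1) ed(1)] converse_rtrancl_into_rtrancl[OF ed(2) IH(2)] by blast
  qed
  show ?thesis unfolding connected_set_def
  proof (intro ballI)
    fix u w assume "u \<in> ?I" "w \<in> ?I"
    then obtain p q where pq: "u = Q!p" "w = Q!q" "lo \<le> p" "p \<le> hi" "lo \<le> q" "q \<le> hi" by blast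
    show "(u, w) \<in> ?r\<^sup>*"
    proof (cases "p \<le> q")
      case True
      then show ?thesis using main[of p "q - p"] pq by simp
    next
      case False
      then show ?thesis using main[of q "p - q"] pq by simp
    qed
  qed
qed

lemma side_contra:
  assumes P: "is_path V E P" and c: "P!0 = c1" "P!(length P - 1) = c2"
    and S: "S \<subseteq> set P" "connected_set E S" "s1 \<in> S" "E c1 s1" "s2 \<in> S" "E c2 s2"
    and w: "w \<in> set P" "w \<noteq> c1" "w \<noteq> c2" "w \<noteq> P!1" "w \<noteq> P!(length P - 2)" "E v w"
    and vs: "\<forall>s\<in>S. E v s \<longrightarrow> E c1 s \<or> E c2 s"
  shows False
proof -
  have s1: "s1 = P!1" using path_nbr0[OF P, of s1] S c by auto
  have s2: "s2 = P!(length P - 2)" using path_nbrl[OF P, of s2] S c by auto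
  obtain k where k: "k < length P" "w = P!k" using w(1) by (metis in_set_conv_nth)
  have "k \<noteq> 0" using k(2) w(2) c(1) by metis
  have "k \<noteq> length P - 1" using k(2) w(3) c(2) by metis
  then have "1 \<le> k" "k \<le> length P - 2" "length P - 2 < length P" using k \<open>k \<noteq> 0\<close> by auto
  then have "w \<in> S" using path_interval[OF P S(1,2), of 1 "length P - 2" k] S s1 s2 k by auto
  then have "E c1 w \<or> E c2 w" using vs w by blast
  then show False using path_nbr0[OF P w(1)] path_nbrl[OF P w(1)] c w by auto
qed

locale L33 =
  fixes V :: "'a set" and E :: "'a \<Rightarrow> 'a \<Rightarrow> bool" and C L R :: "'a set"
    and c1 c2 v a b :: 'a and H HL HR :: "'a list"
  assumes G: "graph V E" and sep: "proper_separator V E C L R"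
    and hole: "sep_hole V E C L R c1 c2 H HL HR" and vV: "v \<in> V" and vH: "v \<notin> set H"
    and a: "a \<in> set HL - {c1, c2} - {HL ! 1, HL ! (length HL - 2)}" "E v a"
    and b: "b \<in> set HR - {c1, c2} - {HR ! 1, HR ! (length HR - 2)}" "E v b"
begin

lemma sym: "E x y \<longleftrightarrow> E y x" using G unfolding graph_def by blast

lemma compL: "component_of E (V - C) L" and compR: "component_of E (V - C) R"
  and LR: "L \<inter> R = {}"
proof -
  have h: "component_of E (V - C) L" "component_of E (V - C) R" "L \<noteq> R"
    using sep unfolding proper_separator_def by simp_all
  then show "component_of E (V - C) L" "component_of E (V - C) R" "L \<inter> R = {}"
    using comp_disj[OF h] by blast+
qed

lemma HLp: "is_path V E HL" and HRp: "is_path V E HR"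
  and HL0: "HL!0 = c1" and HLl: "HL!(length HL - 1) = c2"
  and HR0: "HR!0 = c1" and HRl: "HR!(length HR - 1) = c2"
proof -
  have p: "path_from_to V E HL c1 c2" "path_from_to V E HR c1 c2"
    using hole unfolding sep_hole_def by simp_all
  then show "is_path V E HL" "is_path V E HR" unfolding path_from_to_def by blast+
  have "is_path V E HL" "is_path V E HR" using p unfolding path_from_to_def by blast+
  then have "HL \<noteq> []" "HR \<noteq> []" using path_props(1) by blast+
  then show "HL!0 = c1" "HL!(length HL - 1) = c2" "HR!0 = c1" "HR!(length HR - 1) = c2"
    using p unfolding path_from_to_def by (auto simp: hd_conv_nth last_conv_nth)
qed

lemma HLin: "set HL - {c1, c2} \<subseteq> L" and HRin: "set HR - {c1, c2} \<subseteq> R"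
  and Hun: "set HL \<union> set HR = set H" and HC: "set H \<inter> C = {c1, c2}"
  and HV: "set H \<subseteq> V" and c12: "c1 \<noteq> c2"
proof -
  have h: "is_hole V E H" "c1 \<noteq> c2" "set H \<inter> C = {c1, c2}"
    "set HL \<union> set HR = set H" "set HL - {c1, c2} \<subseteq> L" "set HR - {c1, c2} \<subseteq> R"
    using hole unfolding sep_hole_def by simp_all
  have "set H \<subseteq> V" using conjunct1[OF conjunct2[OF conjunct2[OF h(1)[unfolded is_hole_def]]]] .
  then show "set HL - {c1, c2} \<subseteq> L" "set HR - {c1, c2} \<subseteq> R"
    "set HL \<union> set HR = set H" "set H \<inter> C = {c1, c2}" "set H \<subseteq> V" "c1 \<noteq> c2"
    using h by auto
qed

lemma aL: "a \<in> L" using a HLin by blast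
lemma bR: "b \<in> R" using b HRin by blast

lemma notC: "x \<in> set H \<Longrightarrow> x \<noteq> c1 \<Longrightarrow> x \<noteq> c2 \<Longrightarrow> x \<in> V - C"
  using HC HV by blast

lemma c12_nadj: "\<not> E c1 c2"
proof
  assume e: "E c1 c2"
  have ne: "HL \<noteq> []" using path_props[OF HLp] by blast
  have "HL!(length HL - 1) \<in> set HL" using ne by simp
  then have c2in: "c2 \<in> set HL" using HLl by simp
  have c21: "c2 = HL!1" using path_nbr0[OF HLp c2in] HL0 e by simp
  have dHL: "distinct HL" using path_props[OF HLp] by blast
  have ka: "a \<in> set HL" and an: "a \<noteq> c1" "a \<noteq> c2" using a by blast+
  obtain k where k: "k < length HL" "a = HL!k" using ka by (auto simp: in_set_conv_nth)
  have "k \<noteq> 0"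
  proof
    assume "k = 0" then show False using k(2) an(1) HL0 by simp
  qed
  have "k \<noteq> length HL - 1" using k an HLl by auto
  have "1 < length HL" using k \<open>k \<noteq> 0\<close> by linarith
  have "HL!(length HL - 1) = HL!1" using c21 HLl by simp
  then have "length HL - 1 = 1" using dHL \<open>1 < length HL\<close> by (simp add: nth_eq_iff_index_eq)
  then show False using k \<open>k \<noteq> 0\<close> \<open>k \<noteq> length HL - 1\<close> by linarith
qed

lemma Hsplit: "x \<in> set H - {c1, c2} \<Longrightarrow> (x \<in> L \<and> x \<in> set HL) \<or> (x \<in> R \<and> x \<in> set HR)"
proof -
  assume x: "x \<in> set H - {c1, c2}"
  then have "x \<in> set HL - {c1, c2} \<or> x \<in> set HR - {c1, c2}" using Hun by auto
  then show ?thesis using HLin HRin by auto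
qed

lemma core:
  assumes S: "S \<subseteq> set H - {c1, c2}" "connected_set E S" "s1 \<in> S" "E c1 s1" "s2 \<in> S" "E c2 s2"
    and vs: "\<forall>s\<in>S. E v s \<longrightarrow> E c1 s \<or> E c2 s"
  shows False
proof -
  have SW: "S \<subseteq> V - C"
  proof
    fix x assume "x \<in> S"
    then have "x \<in> set H" "x \<noteq> c1" "x \<noteq> c2" using S(1) by auto
    then show "x \<in> V - C" by (rule notC)
  qed
  have s1H: "s1 \<in> set H - {c1, c2}" using S(1,3) by auto
  from Hsplit[OF s1H] show False
  proof
    assume "s1 \<in> L \<and> s1 \<in> set HL"
    then have SL: "S \<subseteq> L" using comp_closed[OF compL SW S(2) S(3)] by blast
    have SH: "S \<subseteq> set HL"
    proof
      fix x assume x: "x \<in> S"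
      then have "x \<in> L" using SL by auto
      then have "x \<notin> R" using LR by auto
      then show "x \<in> set HL" using Hsplit[of x] S(1) x by auto
    qed
    have a': "a \<in> set HL" "a \<noteq> c1" "a \<noteq> c2" "a \<noteq> HL!1" "a \<noteq> HL!(length HL - 2)" using a(1) by auto
    show False by (rule side_contra[OF HLp HL0 HLl SH S(2,3,4,5,6) a' a(2) vs])
  next
    assume "s1 \<in> R \<and> s1 \<in> set HR"
    then have SR: "S \<subseteq> R" using comp_closed[OF compR SW S(2) S(3)] by blast
    have SH: "S \<subseteq> set HR"
    proof
      fix x assume x: "x \<in> S"
      then have "x \<in> R" using SR by auto
      then have "x \<notin> L" using LR by auto
      then show "x \<in> set HR" using Hsplit[of x] S(1) x by auto
    qed
    have b': "b \<in> set HR" "b \<noteq> c1" "b \<noteq> c2" "b \<noteq> HR!1" "b \<noteq> HR!(length HR - 2)" using b(1) by auto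
    show False by (rule side_contra[OF HRp HR0 HRl SH S(2,3,4,5,6) b' b(2) vs])
  qed
qed

lemma no_common: "q \<in> set H \<Longrightarrow> E a q \<Longrightarrow> E q b \<Longrightarrow> False"
proof -
  assume q: "q \<in> set H" "E a q" "E q b"
  show False
  proof (cases "q = c1 \<or> q = c2")
    case True
    then show False
    proof
      assume "q = c1"
      then have "E (HL!0) a" using q(2) sym HL0 by blast
      then have "a = HL!1" using path_nbr0[OF HLp, of a] a by blast
      then show False using a by blast
    next
      assume "q = c2"
      then have "E (HL!(length HL - 1)) a" using q(2) sym HLl by blast
      then have "a = HL!(length HL - 2)" using path_nbrl[OF HLp, of a] a by blast
      then show False using a by blast
    qed
  next
    case False
    then have "q \<in> V - C" using notC q by blast
    then have "q \<in> L" using compL aL q unfolding component_of_def by blast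
    moreover have "b \<in> V - C" using notC b Hun by blast
    moreover have "b \<notin> L" using bR LR by blast
    ultimately show False using compL q unfolding component_of_def by blast
  qed
qed

lemma major: "is_major V E H v"
  unfolding is_major_def
proof (intro conjI notI)
  have aH: "a \<in> set H" and bH: "b \<in> set H" using a b Hun by blast+
  show "nbrs_in E H v = {} \<Longrightarrow> False" using aH a unfolding nbrs_in_def by blast
  assume "\<exists>p q r. is_path V E [p, q, r] \<and> set [p, q, r] \<subseteq> set H \<and> nbrs_in E H v \<subseteq> {p, q, r}"
  then obtain p q r where pqr: "is_path V E [p, q, r]" "set [p, q, r] \<subseteq> set H"
    "nbrs_in E H v \<subseteq> {p, q, r}" by blast
  have e: "E p q" "E q r" "\<not> E p r"
    using path_adj[OF pqr(1), of 0 1] path_adj[OF pqr(1), of 1 2] path_adj[OF pqr(1), of 0 2] by auto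
  have d: "distinct [p, q, r]" using path_props[OF pqr(1)] by blast
  have ab: "a \<in> {p, q, r}" "b \<in> {p, q, r}" using pqr(3) aH bH a b unfolding nbrs_in_def by blast+
  have aneb: "a \<noteq> b" using aL bR LR by blast
  have nab: "\<not> E a b"
  proof
    assume "E a b"
    moreover have "b \<in> V - C" using notC b Hun by blast
    moreover have "b \<notin> L" using bR LR by blast
    ultimately show False using compL aL unfolding component_of_def by blast
  qed
  have ba: "\<not> E b a" using nab sym by blast
  have eqp: "E q p" "E r q" using e sym by blast+
  have pr: "(a = p \<and> b = r) \<or> (a = r \<and> b = p)"
    using ab aneb nab ba e eqp by auto
  have "E a q \<and> E q b" using pr e eqp by auto
  then have "E a q" "E q b" by auto
  moreover have "q \<in> set H" using pqr(2) by simp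
  ultimately show False using no_common by blast
qed

lemma notin_I:
  assumes "distinct Q" "i < length Q" "i < lo \<or> hi < i"
  shows "Q!i \<notin> {Q!k | k. lo \<le> k \<and> k \<le> hi \<and> k < length Q}"
  using assms by (auto simp: nth_eq_iff_index_eq)

lemma core_Q:
  assumes Q: "is_sector V E H v Q" and I: "hi < length Q"
    and nc: "c1 \<notin> {Q!k | k. lo \<le> k \<and> k \<le> hi \<and> k < length Q}"
            "c2 \<notin> {Q!k | k. lo \<le> k \<and> k \<le> hi \<and> k < length Q}"
    and s: "lo \<le> i1" "i1 \<le> hi" "E c1 (Q!i1)" "lo \<le> i2" "i2 \<le> hi" "E c2 (Q!i2)"
    and lo: "lo = 0 \<Longrightarrow> E c1 (Q!0) \<or> E c2 (Q!0)"
    and hi: "hi = length Q - 1 \<Longrightarrow> E c1 (Q!hi) \<or> E c2 (Q!hi)"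
  shows False
proof -
  let ?I = "{Q!k | k. lo \<le> k \<and> k \<le> hi \<and> k < length Q}"
  have I2: "?I = {Q!k | k. lo \<le> k \<and> k \<le> hi}" using I by auto
  have Qp: "is_path V E Q" "set Q \<subseteq> set H" "hd Q \<noteq> last Q"
    and Qint: "\<forall>q \<in> set Q - {hd Q, last Q}. \<not> E v q"
    using Q unfolding is_sector_def by blast+
  have Qne: "Q \<noteq> []" and dQ: "distinct Q" using path_props[OF Qp(1)] by blast+
  have hd: "hd Q = Q!0" and lst: "last Q = Q!(length Q - 1)"
    using Qne by (simp_all add: hd_conv_nth last_conv_nth)
  show False
  proof (rule core[of ?I "Q!i1" "Q!i2"])
    show "?I \<subseteq> set H - {c1, c2}" using nc Qp(2) by auto
    show "connected_set E ?I" unfolding I2 by (rule interval_connected[OF Qp(1) I])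
    have "i1 < length Q" "i2 < length Q" using s I by linarith+
    then show "Q!i1 \<in> ?I" "Q!i2 \<in> ?I" using s by blast+
    show "E c1 (Q!i1)" "E c2 (Q!i2)" using s(3,6) by blast+
    show "\<forall>s\<in>?I. E v s \<longrightarrow> E c1 s \<or> E c2 s"
    proof (intro ballI impI)
      fix x assume x: "x \<in> ?I" "E v x"
      then obtain k where k: "x = Q!k" "lo \<le> k" "k \<le> hi" "k < length Q" by blast
      show "E c1 x \<or> E c2 x"
      proof (cases "k = 0 \<or> k = length Q - 1")
        case True
        then show ?thesis
        proof
          assume "k = 0" then have "lo = 0" using k by simp
          then show ?thesis using lo k \<open>k = 0\<close> by simp
        next
          assume "k = length Q - 1" then have "hi = length Q - 1" using k I by linarith
          then show ?thesis using hi k \<open>k = length Q - 1\<close> by simp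
        qed
      next
        case False
        then have "x \<in> set Q - {hd Q, last Q}" using k dQ hd lst Qne
          by (auto simp: nth_eq_iff_index_eq)
        then show ?thesis using Qint x by blast
      qed
    qed
  qed
qed

lemma core_Q':
  assumes Q: "is_sector V E H v Q" and I: "hi < length Q"
    and n1: "c1 \<notin> set Q \<or> (\<exists>i. i < length Q \<and> c1 = Q!i \<and> (i < lo \<or> hi < i))"
    and n2: "c2 \<notin> set Q \<or> (\<exists>i. i < length Q \<and> c2 = Q!i \<and> (i < lo \<or> hi < i))"
    and s: "lo \<le> i1" "i1 \<le> hi" "E c1 (Q!i1)" "lo \<le> i2" "i2 \<le> hi" "E c2 (Q!i2)"
    and lo: "lo = 0 \<Longrightarrow> E c1 (Q!0) \<or> E c2 (Q!0)"
    and hi: "hi = length Q - 1 \<Longrightarrow> E c1 (Q!hi) \<or> E c2 (Q!hi)"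
  shows False
proof -
  have "is_path V E Q" using Q unfolding is_sector_def by blast
  then have dQ: "distinct Q" using path_props by blast
  have nc: "c \<notin> {Q!k | k. lo \<le> k \<and> k \<le> hi \<and> k < length Q}"
    if "c \<notin> set Q \<or> (\<exists>i. i < length Q \<and> c = Q!i \<and> (i < lo \<or> hi < i))" for c
    using that
  proof
    assume "c \<notin> set Q" then show ?thesis by auto
  next
    assume "\<exists>i. i < length Q \<and> c = Q!i \<and> (i < lo \<or> hi < i)"
    then obtain i where i: "i < length Q" "c = Q!i" "i < lo \<or> hi < i" by blast
    show ?thesis unfolding i(2) by (rule notin_I[OF dQ i(1) i(3)])
  qed
  show False by (rule core_Q[OF Q I nc[OF n1] nc[OF n2] s lo hi])
qed

lemma distant: "distant V E H v c1 c2"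
  unfolding distant_def
proof (intro conjI notI)
  show c1H: "c1 \<in> set H" and c2H: "c2 \<in> set H" using HC by blast+
  assume "\<exists>Q. is_sector V E H v Q \<and> c1 \<in> ext_nbhd E H v Q \<and> c2 \<in> ext_nbhd E H v Q"
  then obtain Q where Q: "is_sector V E H v Q" and e1: "c1 \<in> ext_nbhd E H v Q"
    and e2: "c2 \<in> ext_nbhd E H v Q" by blast
  have Qp: "is_path V E Q" "set Q \<subseteq> set H" "hd Q \<noteq> last Q"
    using Q unfolding is_sector_def by blast+
  have Qne: "Q \<noteq> []" and dQ: "distinct Q" using path_props[OF Qp(1)] by blast+
  have hd: "hd Q = Q!0" and lst: "last Q = Q!(length Q - 1)"
    using Qne by (simp_all add: hd_conv_nth last_conv_nth)
  have m2: "length Q \<ge> 2"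
  proof (rule ccontr)
    assume "\<not> length Q \<ge> 2"
    then have "length Q - 1 = 0" by simp
    then show False using Qp(3) hd lst by simp
  qed
  have adj: "E (Q!k) (Q!Suc k)" "E (Q!Suc k) (Q!k)" if "Suc k < length Q" for k
    using path_adj[OF Qp(1), of k "Suc k"] path_adj[OF Qp(1), of "Suc k" k] that by auto
  have nadj: "\<not> E c1 c2" "\<not> E c2 c1" using c12_nadj sym[of c2 c1] by blast+
  have ext: "c \<in> set Q \<or> (c \<notin> set Q \<and> (E c (Q!0) \<or> E c (Q!(length Q - 1))))"
    if "c \<in> ext_nbhd E H v Q" for c
  proof -
    have "c \<in> set Q \<or> (c \<notin> set Q \<and> (E c (hd Q) \<or> E c (last Q)))"
      using that unfolding ext_nbhd_def by blast
    then show ?thesis unfolding hd lst .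
  qed
  note cQ = core_Q'[OF Q]
  have idx: "\<exists>i. i < length Q \<and> c = Q!i" if "c \<in> set Q" for c
    using that by (auto simp: in_set_conv_nth)
  consider (A) "c1 \<in> set Q" "c2 \<in> set Q"
    | (B) "c1 \<in> set Q" "c2 \<notin> set Q" "E c2 (Q!0) \<or> E c2 (Q!(length Q - 1))"
    | (B') "c2 \<in> set Q" "c1 \<notin> set Q" "E c1 (Q!0) \<or> E c1 (Q!(length Q - 1))"
    | (C) "c1 \<notin> set Q" "c2 \<notin> set Q" "E c1 (Q!0) \<or> E c1 (Q!(length Q - 1))"
        "E c2 (Q!0) \<or> E c2 (Q!(length Q - 1))"
    using ext[OF e1] ext[OF e2] by blast
  then show False
  proof cases
    case A
    obtain i where i: "i < length Q" "c1 = Q!i" using idx[OF A(1)] by blast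
    obtain j where j: "j < length Q" "c2 = Q!j" using idx[OF A(2)] by blast
    have "i \<noteq> j" using i j c12 by auto
    then consider "i < j" | "j < i" by linarith
    then show False
    proof cases
      case 1
      have si: "Suc i < length Q" using 1 j by linarith
      have "Suc i \<noteq> j"
      proof
        assume "Suc i = j"
        then have "E c1 c2" using adj(1)[OF si] i j by simp
        then show False using nadj by simp
      qed
      then have ij2: "Suc i < j" using 1 by linarith
      have sj: "Suc (j - 1) < length Q" "Suc (j - 1) = j" using j ij2 by linarith+
      show False
      proof (rule cQ[of "j - 1" "Suc i" "Suc i" "j - 1"])
        show "j - 1 < length Q" using j by linarith
        show "c1 \<notin> set Q \<or> (\<exists>i'. i' < length Q \<and> c1 = Q!i' \<and> (i' < Suc i \<or> j - 1 < i'))"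
          using i by auto
        show "c2 \<notin> set Q \<or> (\<exists>i'. i' < length Q \<and> c2 = Q!i' \<and> (i' < Suc i \<or> j - 1 < i'))"
          using j ij2 by (intro disjI2 exI[of _ j]) auto
        show "Suc i \<le> Suc i" "Suc i \<le> j - 1" "Suc i \<le> j - 1" "j - 1 \<le> j - 1" using ij2 by auto
        show "E c1 (Q!Suc i)" using adj(1)[OF si] i by simp
        show "E c2 (Q!(j - 1))" using adj(2)[OF sj(1)] j sj(2) by simp
        show "Suc i = 0 \<Longrightarrow> E c1 (Q!0) \<or> E c2 (Q!0)" by simp
        show "j - 1 = length Q - 1 \<Longrightarrow> E c1 (Q!(j - 1)) \<or> E c2 (Q!(j - 1))" using j ij2 by linarith
      qed
    next
      case 2
      have sj: "Suc j < length Q" using 2 i by linarith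
      have "Suc j \<noteq> i"
      proof
        assume "Suc j = i"
        then have "E c2 c1" using adj(1)[OF sj] i j by simp
        then show False using nadj by simp
      qed
      then have ij2: "Suc j < i" using 2 by linarith
      have si: "Suc (i - 1) < length Q" "Suc (i - 1) = i" using i ij2 by linarith+
      show False
      proof (rule cQ[of "i - 1" "Suc j" "i - 1" "Suc j"])
        show "i - 1 < length Q" using i by linarith
        show "c1 \<notin> set Q \<or> (\<exists>i'. i' < length Q \<and> c1 = Q!i' \<and> (i' < Suc j \<or> i - 1 < i'))"
          using i ij2 by (intro disjI2 exI[of _ i]) auto
        show "c2 \<notin> set Q \<or> (\<exists>i'. i' < length Q \<and> c2 = Q!i' \<and> (i' < Suc j \<or> i - 1 < i'))"
          using j by auto
        show "Suc j \<le> i - 1" "i - 1 \<le> i - 1" "Suc j \<le> Suc j" "Suc j \<le> i - 1" using ij2 by auto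
        show "E c1 (Q!(i - 1))" using adj(2)[OF si(1)] i si(2) by simp
        show "E c2 (Q!Suc j)" using adj(1)[OF sj] j by simp
        show "Suc j = 0 \<Longrightarrow> E c1 (Q!0) \<or> E c2 (Q!0)" by simp
        show "i - 1 = length Q - 1 \<Longrightarrow> E c1 (Q!(i - 1)) \<or> E c2 (Q!(i - 1))" using i ij2 by linarith
      qed
    qed
  next
    case B
    obtain i where i: "i < length Q" "c1 = Q!i" using idx[OF B(1)] by blast
    from B(3) show False
    proof
      assume h: "E c2 (Q!0)"
      have i0: "i \<noteq> 0"
      proof
        assume "i = 0" then have "E c2 c1" using h i by simp
        then show False using nadj by simp
      qed
      have si: "Suc (i - 1) < length Q" "Suc (i - 1) = i" using i i0 by linarith+
      show False
      proof (rule cQ[of "i - 1" 0 "i - 1" 0])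
        show "i - 1 < length Q" using i by linarith
        show "c1 \<notin> set Q \<or> (\<exists>i'. i' < length Q \<and> c1 = Q!i' \<and> (i' < 0 \<or> i - 1 < i'))"
          using i i0 by (intro disjI2 exI[of _ i]) auto
        show "c2 \<notin> set Q \<or> (\<exists>i'. i' < length Q \<and> c2 = Q!i' \<and> (i' < 0 \<or> i - 1 < i'))"
          using B(2) by blast
        show "0 \<le> i - 1" "i - 1 \<le> i - 1" "(0::nat) \<le> 0" "0 \<le> i - 1" by auto
        show "E c1 (Q!(i - 1))" using adj(2)[OF si(1)] i si(2) by simp
        show "E c2 (Q!0)" using h .
        show "0 = 0 \<Longrightarrow> E c1 (Q!0) \<or> E c2 (Q!0)" using h by blast
        show "i - 1 = length Q - 1 \<Longrightarrow> E c1 (Q!(i - 1)) \<or> E c2 (Q!(i - 1))" using i i0 by linarith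
      qed
    next
      assume h: "E c2 (Q!(length Q - 1))"
      have il: "i \<noteq> length Q - 1"
      proof
        assume "i = length Q - 1" then have "E c2 c1" using h i by simp
        then show False using nadj by simp
      qed
      have si: "Suc i < length Q" using i il by linarith
      show False
      proof (rule cQ[of "length Q - 1" "Suc i" "Suc i" "length Q - 1"])
        show "length Q - 1 < length Q" using m2 by linarith
        show "c1 \<notin> set Q \<or> (\<exists>i'. i' < length Q \<and> c1 = Q!i' \<and> (i' < Suc i \<or> length Q - 1 < i'))"
          using i by auto
        show "c2 \<notin> set Q \<or> (\<exists>i'. i' < length Q \<and> c2 = Q!i' \<and> (i' < Suc i \<or> length Q - 1 < i'))"
          using B(2) by blast
        show "Suc i \<le> Suc i" "Suc i \<le> length Q - 1" "Suc i \<le> length Q - 1" "length Q - 1 \<le> length Q - 1"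
          using si by auto
        show "E c1 (Q!Suc i)" using adj(1)[OF si] i by simp
        show "E c2 (Q!(length Q - 1))" using h .
        show "Suc i = 0 \<Longrightarrow> E c1 (Q!0) \<or> E c2 (Q!0)" by simp
        show "length Q - 1 = length Q - 1 \<Longrightarrow> E c1 (Q!(length Q - 1)) \<or> E c2 (Q!(length Q - 1))"
          using h by blast
      qed
    qed
  next
    case B'
    obtain i where i: "i < length Q" "c2 = Q!i" using idx[OF B'(1)] by blast
    from B'(3) show False
    proof
      assume h: "E c1 (Q!0)"
      have i0: "i \<noteq> 0"
      proof
        assume "i = 0" then have "E c1 c2" using h i by simp
        then show False using nadj by simp
      qed
      have si: "Suc (i - 1) < length Q" "Suc (i - 1) = i" using i i0 by linarith+
      show False
      proof (rule cQ[of "i - 1" 0 0 "i - 1"])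
        show "i - 1 < length Q" using i by linarith
        show "c1 \<notin> set Q \<or> (\<exists>i'. i' < length Q \<and> c1 = Q!i' \<and> (i' < 0 \<or> i - 1 < i'))"
          using B'(2) by blast
        show "c2 \<notin> set Q \<or> (\<exists>i'. i' < length Q \<and> c2 = Q!i' \<and> (i' < 0 \<or> i - 1 < i'))"
          using i i0 by (intro disjI2 exI[of _ i]) auto
        show "(0::nat) \<le> 0" "0 \<le> i - 1" "0 \<le> i - 1" "i - 1 \<le> i - 1" by auto
        show "E c2 (Q!(i - 1))" using adj(2)[OF si(1)] i si(2) by simp
        show "E c1 (Q!0)" using h .
        show "0 = 0 \<Longrightarrow> E c1 (Q!0) \<or> E c2 (Q!0)" using h by blast
        show "i - 1 = length Q - 1 \<Longrightarrow> E c1 (Q!(i - 1)) \<or> E c2 (Q!(i - 1))" using i i0 by linarith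
      qed
    next
      assume h: "E c1 (Q!(length Q - 1))"
      have il: "i \<noteq> length Q - 1"
      proof
        assume "i = length Q - 1" then have "E c1 c2" using h i by simp
        then show False using nadj by simp
      qed
      have si: "Suc i < length Q" using i il by linarith
      show False
      proof (rule cQ[of "length Q - 1" "Suc i" "length Q - 1" "Suc i"])
        show "length Q - 1 < length Q" using m2 by linarith
        show "c1 \<notin> set Q \<or> (\<exists>i'. i' < length Q \<and> c1 = Q!i' \<and> (i' < Suc i \<or> length Q - 1 < i'))"
          using B'(2) by blast
        show "c2 \<notin> set Q \<or> (\<exists>i'. i' < length Q \<and> c2 = Q!i' \<and> (i' < Suc i \<or> length Q - 1 < i'))"
          using i by auto
        show "Suc i \<le> length Q - 1" "length Q - 1 \<le> length Q - 1" "Suc i \<le> Suc i" "Suc i \<le> length Q - 1"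
          using si by auto
        show "E c2 (Q!Suc i)" using adj(1)[OF si] i by simp
        show "E c1 (Q!(length Q - 1))" using h .
        show "Suc i = 0 \<Longrightarrow> E c1 (Q!0) \<or> E c2 (Q!0)" by simp
        show "length Q - 1 = length Q - 1 \<Longrightarrow> E c1 (Q!(length Q - 1)) \<or> E c2 (Q!(length Q - 1))"
          using h by blast
      qed
    qed
  next
    case C
    have n1: "c1 \<notin> set Q \<or> (\<exists>i'. i' < length Q \<and> c1 = Q!i' \<and> (i' < lo \<or> hi < i'))" for lo hi
      using C(1) by blast
    have n2: "c2 \<notin> set Q \<or> (\<exists>i'. i' < length Q \<and> c2 = Q!i' \<and> (i' < lo \<or> hi < i'))" for lo hi
      using C(2) by blast
    have l1: "length Q - 1 < length Q" "0 < length Q" using m2 by linarith+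
    have l0: "length Q - 1 \<noteq> 0" using m2 by linarith
    show False
    proof (cases "E c1 (Q!0) \<and> E c2 (Q!0)")
      case True
      show False
        by (rule cQ[of 0 0 0 0, OF l1(2) n1 n2]) (use True l0 in auto)
    next
      case F1: False
      show False
      proof (cases "E c1 (Q!(length Q - 1)) \<and> E c2 (Q!(length Q - 1))")
        case True
        show False
          by (rule cQ[of "length Q - 1" "length Q - 1" "length Q - 1" "length Q - 1", OF l1(1) n1 n2])
            (use True l0 in auto)
      next
        case False
        then have "(E c1 (Q!0) \<and> E c2 (Q!(length Q - 1))) \<or> (E c1 (Q!(length Q - 1)) \<and> E c2 (Q!0))"
          using F1 C(3,4) by blast
        then show False
        proof
          assume h: "E c1 (Q!0) \<and> E c2 (Q!(length Q - 1))"
          show False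
            by (rule cQ[of "length Q - 1" 0 0 "length Q - 1", OF l1(1) n1 n2]) (use h in auto)
        next
          assume h: "E c1 (Q!(length Q - 1)) \<and> E c2 (Q!0)"
          show False
            by (rule cQ[of "length Q - 1" 0 "length Q - 1" 0, OF l1(1) n1 n2]) (use h in auto)
        qed
      qed
    qed
  qed
qed

lemma heavy: "heavy V E H c1 c2 v"
  unfolding heavy_def using major distant by blast

end

theorem lemma3p3:
  fixes V :: "'a set" and E :: "'a \<Rightarrow> 'a \<Rightarrow> bool"
    and C L R :: "'a set" and c1 c2 v :: 'a and H HL HR :: "'a list"
  assumes "in_class_C V E"
    and "proper_separator V E C L R"
    and "c1 \<in> C" and "c2 \<in> C"
    and "sep_hole V E C L R c1 c2 H HL HR"
    and "v \<in> V" and "v \<notin> set H"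
    and "\<exists>u \<in> set HL - {c1, c2} - {HL ! 1, HL ! (length HL - 2)}. E v u"
    and "\<exists>u \<in> set HR - {c1, c2} - {HR ! 1, HR ! (length HR - 2)}. E v u"
  shows "heavy V E H c1 c2 v"
proof -
  obtain a where a: "a \<in> set HL - {c1, c2} - {HL ! 1, HL ! (length HL - 2)}" "E v a" using assms(8) by blast
  obtain b where b: "b \<in> set HR - {c1, c2} - {HR ! 1, HR ! (length HR - 2)}" "E v b" using assms(9) by blast
  have G: "graph V E" using assms(1) unfolding in_class_C_def by blast
  interpret L33 V E C L R c1 c2 v a b H HL HR
    using G assms(2,5,6,7) a b by unfold_locales
  show ?thesis by (rule heavy)
qed

end
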